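(* Let $X$ be a strongly connected finite digraph with $\delta(X)=0$. Then $$\mathcal{BF}_X(\mathcal{L}(X))\subseteq\mathcal{BF}_X(\mathbb{Z}V_X)\subseteq\mathcal{L}(X),$$ and $\mathrm{rank}_{\mathbb{Z}}\mathcal{BF}_X(\mathcal{L}(X))=\mathrm{rank}_{\mathbb{Z}}\mathcal{BF}_X(\mathbb{Z}V_X)=\mathrm{rank}_{\mathbb{Z}}\mathcal{L}(X)$.
   Context: Digraph $X=(V_X,E_X)$ with incidence $e\mapsto(o(e),t(e))$; strongly connected means a directed path exists between any two distinct vertices. For finite $X$: $\mathcal{A}_X(v)=\sum_{o(e)=v}t(e)$ on $\mathbb{Z}V_X$, $\mathcal{BF}_X=\mathcal{I}-\mathcal{A}_X$, $\mathrm{BF}(X)=\mathrm{coker}\,\mathcal{BF}_X$, $g_X(u)=\det(\mathcal{I}-\mathcal{A}_Xu)$, $r_X=\mathrm{ord}_{u=1}g_X$, $\delta(X)=r_X-\mathrm{rank}_{\mathbb{Z}}\mathrm{BF}(X)$. Writing $\mathcal{BF}_{\mathbb{Q}}$ for the extension to $\mathbb{Q}V_X$, one has (when $\delta(X)=0$) the decomposition $\mathbb{Q}V_X=\ker\mathcal{BF}_{\mathbb{Q}}\oplus W$ with $W=\mathrm{Im}\,\mathcal{BF}_{\mathbb{Q}}$, and $\mathcal{L}(X)=\mathbb{Z}V_X\cap W$ (with $\mathbb{Z}V_X\subseteq\mathbb{Q}V_X$). *)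

theory Defs
  imports "HOL-Analysis.Analysis" "HOL-Computational_Algebra.Polynomial"
begin

text \<open>A finite digraph: vertices = the finite type 'v, edges = a finite set E of
  some type 'e, with origin and terminus maps o, t.\<close>

definition strongly_connected :: "'e set \<Rightarrow> ('e \<Rightarrow> 'v) \<Rightarrow> ('e \<Rightarrow> 'v) \<Rightarrow> bool" where
  "strongly_connected E o' t \<longleftrightarrow>
     (\<forall>u v. u \<noteq> v \<longrightarrow> (u, v) \<in> {(o' e, t e) | e. e \<in> E}\<^sup>+)"

text \<open>Matrix of the adjacency operator A_X on ZV_X w.r.t. the vertex basis:
  A_X(v) = sum of t(e) over edges e with o(e) = v, so entry (w,v) counts edges v -> w.\<close>
definition adj_mat :: "'e set \<Rightarrow> ('e \<Rightarrow> 'v::finite) \<Rightarrow> ('e \<Rightarrow> 'v) \<Rightarrow> int^'v^'v" where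
  "adj_mat E o' t = (\<chi> w v. int (card {e \<in> E. o' e = v \<and> t e = w}))"

definition BF_mat :: "'e set \<Rightarrow> ('e \<Rightarrow> 'v::finite) \<Rightarrow> ('e \<Rightarrow> 'v) \<Rightarrow> int^'v^'v" where
  "BF_mat E o' t = mat 1 - adj_mat E o' t"

text \<open>The operator BF_X on ZV_X = int^'v.\<close>
definition BF :: "'e set \<Rightarrow> ('e \<Rightarrow> 'v::finite) \<Rightarrow> ('e \<Rightarrow> 'v) \<Rightarrow> int^'v \<Rightarrow> int^'v" where
  "BF E o' t x = BF_mat E o' t *v x"

text \<open>Its extension to QV_X = rat^'v.\<close>
definition BF_Q :: "'e set \<Rightarrow> ('e \<Rightarrow> 'v::finite) \<Rightarrow> ('e \<Rightarrow> 'v) \<Rightarrow> rat^'v \<Rightarrow> rat^'v" where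
  "BF_Q E o' t x = (\<chi> i j. of_int (BF_mat E o' t $ i $ j)) *v x"

definition to_Q :: "int^'v \<Rightarrow> rat^'v" where
  "to_Q z = (\<chi> i. of_int (z $ i))"

text \<open>g_X(u) = det(I - A_X u) as an integer polynomial.\<close>
definition zeta_poly :: "'e set \<Rightarrow> ('e \<Rightarrow> 'v::finite) \<Rightarrow> ('e \<Rightarrow> 'v) \<Rightarrow> int poly" where
  "zeta_poly E o' t =
     det ((\<chi> i j. (if i = j then 1 else 0) - [:0, of_int (adj_mat E o' t $ i $ j):]) :: int poly^'v^'v)"

text \<open>r_X = order of vanishing of g_X at u = 1.\<close>
definition r_X :: "'e set \<Rightarrow> ('e \<Rightarrow> 'v::finite) \<Rightarrow> ('e \<Rightarrow> 'v) \<Rightarrow> nat" where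
  "r_X E o' t = order 1 (zeta_poly E o' t)"

text \<open>Z-linear independence of a finite set F of vectors modulo a subgroup H.\<close>
definition zindep_mod :: "(int^'v) set \<Rightarrow> (int^'v) set \<Rightarrow> bool" where
  "zindep_mod H F \<longleftrightarrow>
     (\<forall>c :: int^'v \<Rightarrow> int. (\<Sum>x\<in>F. c x *s x) \<in> H \<longrightarrow> (\<forall>x\<in>F. c x = 0))"

text \<open>Rank of the abelian group S/H (for subgroups H \<subseteq> S of int^'v): maximal size of a
  subset of S that is Z-linearly independent modulo H.\<close>
definition zrank_quot :: "(int^'v) set \<Rightarrow> (int^'v) set \<Rightarrow> nat" where
  "zrank_quot S H = Sup (card ` {F. finite F \<and> F \<subseteq> S \<and> zindep_mod H F})"

text \<open>Rank of a subgroup S of int^'v.\<close>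
definition zrank :: "(int^'v) set \<Rightarrow> nat" where
  "zrank S = zrank_quot S {0}"

text \<open>rank_Z BF(X), BF(X) = coker BF_X = ZV_X / BF_X(ZV_X).\<close>
definition rank_BF_group :: "'e set \<Rightarrow> ('e \<Rightarrow> 'v::finite) \<Rightarrow> ('e \<Rightarrow> 'v) \<Rightarrow> nat" where
  "rank_BF_group E o' t = zrank_quot UNIV (range (BF E o' t))"

definition delta :: "'e set \<Rightarrow> ('e \<Rightarrow> 'v::finite) \<Rightarrow> ('e \<Rightarrow> 'v) \<Rightarrow> int" where
  "delta E o' t = int (r_X E o' t) - int (rank_BF_group E o' t)"

text \<open>L(X) = ZV_X \<inter> Im(BF_Q).\<close>
definition L_X :: "'e set \<Rightarrow> ('e \<Rightarrow> 'v::finite) \<Rightarrow> ('e \<Rightarrow> 'v) \<Rightarrow> (int^'v) set" where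
  "L_X E o' t = {z. to_Q z \<in> range (BF_Q E o' t)}"

end

theory Submission
  imports Defs
begin

lemma common_denom:
  fixes A :: "rat set"
  assumes "finite A"
  shows "\<exists>D::int. D > 0 \<and> (\<forall>q\<in>A. \<exists>z::int. of_int D * q = of_int z)"
  using assms
proof (induction A rule: finite_induct)
  case empty
  then show ?case by (intro exI[of _ 1]) auto
next
  case (insert q A)
  then obtain D where D: "D > 0" "\<forall>q\<in>A. \<exists>z::int. of_int D * q = of_int z" by blast
  obtain a b where ab: "quotient_of q = (a, b)" by (cases "quotient_of q")
  have b: "b > 0" using quotient_of_denom_pos[OF ab] .
  have qe: "q = of_int a / of_int b" using quotient_of_div[OF ab] .
  have "\<exists>z::int. of_int (D * b) * r = of_int z" if r: "r \<in> insert q A" for r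
  proof (cases "r = q")
    case True
    then show ?thesis using b by (intro exI[of _ "D * a"]) (simp add: qe)
  next
    case False
    then have "r \<in> A" using r by simp
    then obtain z where "of_int D * r = of_int z" using D by blast
    then show ?thesis by (intro exI[of _ "z * b"]) (simp add: algebra_simps)
  qed
  moreover have "D * b > 0" using D b by simp
  ultimately show ?case by blast
qed

lemma int_vec_of:
  assumes "\<forall>i. \<exists>z::int. of_int D * (x::rat^'v) $ i = of_int z"
  shows "\<exists>zv. to_Q zv = of_int D *s x"
proof -
  from assms obtain f where "\<forall>i. of_int D * x $ i = of_int (f i)" by metis
  then show ?thesis by (intro exI[of _ "\<chi> i. f i"]) (simp add: to_Q_def vec_eq_iff)
qed

lemma vec_denom:
  fixes x :: "rat^'v::finite"
  shows "\<exists>D::int. D > 0 \<and> (\<exists>zv. to_Q zv = of_int D *s x)"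
proof -
  obtain D::int where "D > 0" "\<forall>q\<in>range (($) x). \<exists>z::int. of_int D * q = of_int z"
    using common_denom[of "range (($) x)"] by auto
  then show ?thesis using int_vec_of[of D x] by auto
qed

lemma to_Q_inj: "inj to_Q"
  by (auto simp: inj_def to_Q_def vec_eq_iff)

lemma to_Q_add: "to_Q (x + y) = to_Q x + to_Q y"
  by (simp add: to_Q_def vec_eq_iff)

lemma to_Q_scale: "to_Q (c *s x) = of_int c *s to_Q x"
  by (simp add: to_Q_def vec_eq_iff)

lemma to_Q_zero: "to_Q 0 = 0"
  by (simp add: to_Q_def vec_eq_iff)

lemma to_Q_sum: "to_Q (sum f A) = (\<Sum>a\<in>A. to_Q (f a))"
  by (induction A rule: infinite_finite_induct) (auto simp: to_Q_zero to_Q_add)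

definition qmat :: "int^'v^'v \<Rightarrow> rat^'v^'v" where
  "qmat A = (\<chi> i j. of_int (A $ i $ j))"

lemma to_Q_mult: "to_Q (A *v z) = qmat A *v to_Q (z::int^'v::finite)"
  by (simp add: to_Q_def qmat_def vec_eq_iff matrix_vector_mult_def)

lemma BF_Q_qmat: "BF_Q E o' t x = qmat (BF_mat E o' t) *v x"
  by (simp add: BF_Q_def qmat_def)

lemma to_Q_BF: "to_Q (BF E o' t z) = BF_Q E o' t (to_Q z)"
  by (simp add: BF_def BF_Q_qmat to_Q_mult)

lemma zindep_gen:
  fixes A :: "int^'v::finite^'v" and F :: "(int^'v) set"
  assumes fin: "finite F" and ind: "zindep_mod (range (\<lambda>z. A *v z)) F"
    and mem: "(\<Sum>v\<in>to_Q ` F. c v *s v) \<in> range (\<lambda>y. qmat A *v y)"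
  shows "\<forall>v\<in>to_Q ` F. c v = 0"
proof -
  obtain y where y: "(\<Sum>v\<in>to_Q ` F. c v *s v) = qmat A *v y" using mem by blast
  have finA: "finite ((\<lambda>x. c (to_Q x)) ` F \<union> range (($) y))" using fin by simp
  obtain D :: int where D: "D > 0"
    and Dq: "\<forall>q\<in>(\<lambda>x. c (to_Q x)) ` F \<union> range (($) y). \<exists>z::int. of_int D * q = of_int z"
    using common_denom[OF finA] by blast
  obtain yz where yz: "to_Q yz = of_int D *s y"
    using int_vec_of[of D y] Dq by auto
  have "\<forall>x\<in>F. \<exists>z::int. of_int D * c (to_Q x) = of_int z" using Dq by blast
  then have "\<exists>d. \<forall>x\<in>F. of_int D * c (to_Q x) = of_int (d x)" by (rule bchoice)
  then obtain d where d: "\<forall>x\<in>F. of_int D * c (to_Q x) = of_int (d x)" by blast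
  have inj: "inj_on to_Q F" by (rule inj_on_subset[OF to_Q_inj]) simp
  have "to_Q (\<Sum>x\<in>F. d x *s x) = (\<Sum>x\<in>F. of_int (d x) *s to_Q x)"
    by (simp add: to_Q_sum to_Q_scale)
  also have "\<dots> = (\<Sum>x\<in>F. of_int D *s (c (to_Q x) *s to_Q x))"
    using d by (intro sum.cong) (auto simp: vector_smult_assoc[symmetric])
  also have "\<dots> = of_int D *s (\<Sum>x\<in>F. c (to_Q x) *s to_Q x)"
    by (simp add: vec.scale_sum_right)
  also have "(\<Sum>x\<in>F. c (to_Q x) *s to_Q x) = (\<Sum>v\<in>to_Q ` F. c v *s v)"
    using sum.reindex[OF inj, of "\<lambda>v. c v *s v"] by simp
  also have "of_int D *s \<dots> = qmat A *v to_Q yz"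
    by (simp add: y yz vec.scale del: vector_smult_assoc)
  also have "\<dots> = to_Q (A *v yz)" by (simp add: to_Q_mult)
  finally have "(\<Sum>x\<in>F. d x *s x) = A *v yz" using to_Q_inj by (meson injD)
  then have "\<forall>x\<in>F. d x = 0" using ind unfolding zindep_mod_def by blast
  then show ?thesis using d D by auto
qed

lemma zindep0_iff:
  fixes F :: "(int^'v::finite) set"
  assumes fin: "finite F"
  shows "zindep_mod {0} F \<longleftrightarrow> vec.independent (to_Q ` F)"
proof
  have r0: "range (\<lambda>z. (0::int^'v^'v) *v z) = {0}" by auto
  have q0: "qmat (0::int^'v^'v) = 0" by (simp add: qmat_def vec_eq_iff)
  assume "zindep_mod {0} F"
  then have ind: "zindep_mod (range (\<lambda>z. (0::int^'v^'v) *v z)) F" using r0 by simp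
  show "vec.independent (to_Q ` F)"
    unfolding vec.independent_explicit
  proof (intro conjI allI impI)
    show "finite (to_Q ` F)" using fin by simp
    fix c assume "(\<Sum>v\<in>to_Q ` F. c v *s v) = 0"
    then have "(\<Sum>v\<in>to_Q ` F. c v *s v) \<in> range (\<lambda>y. qmat (0::int^'v^'v) *v y)"
      using q0 by auto
    then show "\<forall>v\<in>to_Q ` F. c v = 0" using zindep_gen[OF fin ind] by blast
  qed
next
  assume indep: "vec.independent (to_Q ` F)"
  have inj: "inj_on to_Q F" by (rule inj_on_subset[OF to_Q_inj]) simp
  show "zindep_mod {0} F"
    unfolding zindep_mod_def
  proof (intro allI impI)
    fix c :: "int^'v \<Rightarrow> int"
    assume "(\<Sum>x\<in>F. c x *s x) \<in> {0}"
    then have "to_Q (\<Sum>x\<in>F. c x *s x) = 0" by (simp add: to_Q_zero)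
    then have "(\<Sum>x\<in>F. of_int (c x) *s to_Q x) = 0" by (simp add: to_Q_sum to_Q_scale)
    then have "(\<Sum>v\<in>to_Q ` F. of_int (c (inv_into F to_Q v)) *s v) = 0"
      using sum.reindex[OF inj, of "\<lambda>v. of_int (c (inv_into F to_Q v)) *s v"] inj by simp
    moreover have "\<forall>c. (\<Sum>v\<in>to_Q ` F. c v *s v) = 0 \<longrightarrow> (\<forall>v\<in>to_Q ` F. c v = 0)"
      using indep unfolding vec.independent_explicit by blast
    ultimately have "\<forall>v\<in>to_Q ` F. (of_int (c (inv_into F to_Q v)) :: rat) = 0"
      by (rule mp[OF spec[of _ "\<lambda>v. of_int (c (inv_into F to_Q v))"], rotated])
    then show "\<forall>x\<in>F. c x = 0" using inj by auto
  qed
qed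

lemma zrank_dim:
  fixes S :: "(int^'v::finite) set"
  shows "zrank S = vec.dim (to_Q ` S)"
proof -
  have inj: "inj_on to_Q X" for X by (rule inj_on_subset[OF to_Q_inj]) simp
  obtain B where B: "B \<subseteq> to_Q ` S" "vec.independent B" "to_Q ` S \<subseteq> vec.span B"
    "card B = vec.dim (to_Q ` S)"
    using vec.basis_exists by blast
  define F where "F = inv_into S to_Q ` B"
  have FS: "F \<subseteq> S" using B(1) by (auto simp: F_def inv_into_into)
  have BF: "to_Q ` F = B" using B(1) unfolding F_def
    by (rule image_inv_into_cancel[OF refl])
  have finB: "finite B" using B(2) vec.independent_explicit by blast
  have finF: "finite F" using finB by (simp add: F_def)
  have cF: "card F = card B" using BF card_image[OF inj[of F]] by simp
  show ?thesis
    unfolding zrank_def zrank_quot_def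
  proof (rule cSup_eq_maximum)
    show "vec.dim (to_Q ` S) \<in> card ` {F. finite F \<and> F \<subseteq> S \<and> zindep_mod {0} F}"
    proof (rule image_eqI[of _ _ F])
      show "vec.dim (to_Q ` S) = card F" using cF B(4) by simp
      have "zindep_mod {0} F" using zindep0_iff[OF finF] BF B(2) by simp
      then show "F \<in> {F. finite F \<and> F \<subseteq> S \<and> zindep_mod {0} F}" using finF FS by blast
    qed
  next
    fix x assume "x \<in> card ` {F. finite F \<and> F \<subseteq> S \<and> zindep_mod {0} F}"
    then obtain G where G: "finite G" "G \<subseteq> S" "zindep_mod {0} G" "x = card G" by blast
    have "vec.independent (to_Q ` G)" using zindep0_iff[OF G(1)] G(3) by simp
    moreover have "to_Q ` G \<subseteq> to_Q ` S" using G(2) by blast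
    ultimately have "card (to_Q ` G) \<le> vec.dim (to_Q ` S)"
      by (intro vec.independent_card_le_dim)
    then show "x \<le> vec.dim (to_Q ` S)" using G(4) card_image[OF inj[of G]] by simp
  qed
qed

lemma rank_nullity:
  fixes M :: "rat^'v::finite^'v"
  shows "vec.dim {x. M *v x = 0} + vec.dim (range ((*v) M)) = CARD('v)"
proof -
  let ?K = "{x. M *v x = 0}"
  have subK: "vec.subspace ?K" by (rule vec.subspace_kernel)
  obtain BK where BK: "BK \<subseteq> ?K" "vec.independent BK" "?K \<subseteq> vec.span BK" "card BK = vec.dim ?K"
    using vec.basis_exists by blast
  obtain S where S: "BK \<subseteq> S" "vec.independent S" "UNIV \<subseteq> vec.span S"
    by (rule vec.maximal_independent_subset_extend[of BK UNIV]) (use BK(2) in auto)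
  have finS: "finite S" using S(2) by (rule vec.finiteI_independent)
  have cardS: "card S = CARD('v)"
    using vec.basis_card_eq_dim[of S UNIV] S by (simp add: card_cart_basis)
  define C where "C = S - BK"
  have indC: "vec.independent C" using S(2) vec.independent_mono C_def by blast
  have finBK: "finite BK" using finS S(1) finite_subset by blast
  have SU: "S = BK \<union> C" using S(1) C_def by blast
  have finC: "finite C" using finS C_def by simp
  have disj: "BK \<inter> C = {}" using C_def by blast
  have cardSC: "card S = card BK + card C"
    using card_Un_disjoint[OF finBK finC disj] SU by simp
  have sums: "{x + y |x y. x \<in> vec.span BK \<and> y \<in> vec.span C} = vec.span S"
    using vec.span_Un[of BK C] SU by simp
  have "vec.dim (vec.span S) + vec.dim (vec.span BK \<inter> vec.span C) = vec.dim (vec.span BK) + vec.dim (vec.span C)"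
    using vec.dim_sums_Int[of "vec.span BK" "vec.span C"] sums by simp
  moreover have "vec.dim (vec.span S) = CARD('v)" using cardS vec.dim_span_eq_card_independent[OF S(2)] by simp
  moreover have "vec.dim (vec.span BK) = card BK" using vec.dim_span_eq_card_independent[OF BK(2)] by simp
  moreover have "vec.dim (vec.span C) = card C" using vec.dim_span_eq_card_independent[OF indC] by simp
  ultimately have "vec.dim (vec.span BK \<inter> vec.span C) = 0" using cardS cardSC by simp
  then have int0: "vec.span BK \<inter> vec.span C \<subseteq> {0}" by simp
  have injC: "inj_on ((*v) M) (vec.span C)"
  proof (rule inj_onI)
    fix x y assume xy: "x \<in> vec.span C" "y \<in> vec.span C" "M *v x = M *v y"
    then have "M *v (x - y) = 0" by (simp add: matrix_vector_mult_diff_distrib)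
    then have "x - y \<in> vec.span BK" using BK(3) by blast
    moreover have "x - y \<in> vec.span C" using xy vec.span_diff by blast
    ultimately show "x = y" using int0 by auto
  qed
  have dimC: "vec.dim ((*v) M ` C) = card C"
    using vec.dim_image_eq[OF matrix_vector_mul_linear_gen injC] vec.dim_eq_card_independent[OF indC] by simp
  have "range ((*v) M) = (*v) M ` vec.span S" using S(3) by auto
  also have "\<dots> = vec.span ((*v) M ` S)" by (simp add: vec.span_image)
  also have "\<dots> = vec.span ((*v) M ` C)"
  proof (rule antisym)
    have "(*v) M ` S \<subseteq> vec.span ((*v) M ` C)"
    proof
      fix z assume "z \<in> (*v) M ` S"
      then obtain s where s: "s \<in> S" "z = M *v s" by blast
      show "z \<in> vec.span ((*v) M ` C)"
      proof (cases "s \<in> BK")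
        case True
        then have "z = 0" using BK(1) s by auto
        then show ?thesis by (simp add: vec.span_zero)
      next
        case False
        then have "z \<in> (*v) M ` C" using s C_def by blast
        then show ?thesis by (rule vec.span_base)
      qed
    qed
    then show "vec.span ((*v) M ` S) \<subseteq> vec.span ((*v) M ` C)"
      by (intro vec.span_minimal) auto
    show "vec.span ((*v) M ` C) \<subseteq> vec.span ((*v) M ` S)"
      by (intro vec.span_mono) (auto simp: C_def)
  qed
  finally have "vec.dim (range ((*v) M)) = card C" using dimC by simp
  then show ?thesis using BK(4) cardS cardSC by simp
qed

lemma span_Lset:
  fixes A :: "int^'v::finite^'v"
  shows "vec.span (to_Q ` {z. to_Q z \<in> range ((*v) (qmat A))}) = range ((*v) (qmat A))"
proof (rule antisym)
  have sub: "vec.subspace (range ((*v) (qmat A)))"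
    using vec.subspace_image[OF vec.subspace_UNIV] by simp
  show "vec.span (to_Q ` {z. to_Q z \<in> range ((*v) (qmat A))}) \<subseteq> range ((*v) (qmat A))"
    by (rule vec.span_minimal[OF _ sub]) blast
  show "range ((*v) (qmat A)) \<subseteq> vec.span (to_Q ` {z. to_Q z \<in> range ((*v) (qmat A))})"
  proof
    fix w assume "w \<in> range ((*v) (qmat A))"
    then obtain y where y: "w = qmat A *v y" by blast
    obtain D :: int and z where D: "D > 0" "to_Q z = of_int D *s w"
      using vec_denom[of w] by blast
    have "to_Q z = qmat A *v (of_int D *s y)" using D(2) y by (simp add: vec.scale)
    then have "to_Q z \<in> to_Q ` {z. to_Q z \<in> range ((*v) (qmat A))}" by blast
    then have "(1 / of_int D) *s to_Q z \<in> vec.span (to_Q ` {z. to_Q z \<in> range ((*v) (qmat A))})"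
      by (intro vec.span_scale vec.span_base)
    moreover have "(1 / of_int D) *s to_Q z = w" using D by simp
    ultimately show "w \<in> vec.span (to_Q ` {z. to_Q z \<in> range ((*v) (qmat A))})" by simp
  qed
qed

lemma span_all: "vec.span (range (to_Q :: int^'v::finite \<Rightarrow> rat^'v)) = UNIV"
proof -
  have "vec.span (to_Q ` {z. to_Q z \<in> range ((*v) (qmat (mat 1 :: int^'v^'v)))}) = range ((*v) (qmat (mat 1 :: int^'v^'v)))"
    by (rule span_Lset)
  moreover have "qmat (mat 1 :: int^'v^'v) = mat 1" by (simp add: qmat_def mat_def vec_eq_iff)
  ultimately show ?thesis by simp
qed

lemma dims_main:
  fixes A :: "int^'v::finite^'v"
  assumes inter: "\<And>x. x \<in> range ((*v) (qmat A)) \<Longrightarrow> qmat A *v x = 0 \<Longrightarrow> x = 0"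
  defines "L \<equiv> {z. to_Q z \<in> range ((*v) (qmat A))}"
  shows "vec.dim (to_Q ` L) = vec.dim (range ((*v) (qmat A)))"
    and "vec.dim (to_Q ` range ((*v) A)) = vec.dim (range ((*v) (qmat A)))"
    and "vec.dim (to_Q ` ((*v) A) ` L) = vec.dim (range ((*v) (qmat A)))"
proof -
  show d1: "vec.dim (to_Q ` L) = vec.dim (range ((*v) (qmat A)))"
    using vec.dim_span[of "to_Q ` L"] span_Lset[of A] unfolding L_def by simp
  have e2: "to_Q ` range ((*v) A) = (*v) (qmat A) ` range to_Q"
    by (auto simp: to_Q_mult image_iff)
  show "vec.dim (to_Q ` range ((*v) A)) = vec.dim (range ((*v) (qmat A)))"
    unfolding e2 using vec.dim_span[of "(*v) (qmat A) ` range to_Q"]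
    by (simp add: vec.span_image span_all)
  have e3: "to_Q ` ((*v) A) ` L = (*v) (qmat A) ` to_Q ` L"
    by (auto simp: to_Q_mult image_iff)
  have inj: "inj_on ((*v) (qmat A)) (vec.span (to_Q ` L))"
  proof (rule inj_onI)
    fix x y assume xy: "x \<in> vec.span (to_Q ` L)" "y \<in> vec.span (to_Q ` L)" "qmat A *v x = qmat A *v y"
    then have "x - y \<in> vec.span (to_Q ` L)" using vec.span_diff by blast
    then have "x - y \<in> range ((*v) (qmat A))" using span_Lset[of A] unfolding L_def by simp
    moreover have "qmat A *v (x - y) = 0" using xy(3) by (simp add: matrix_vector_mult_diff_distrib)
    ultimately have "x - y = 0" by (rule inter)
    then show "x = y" by simp
  qed
  show "vec.dim (to_Q ` ((*v) A) ` L) = vec.dim (range ((*v) (qmat A)))"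
    unfolding e3 using vec.dim_image_eq[OF matrix_vector_mul_linear_gen inj] d1 by simp
qed

lemma coker_rank_le:
  fixes A :: "int^'v::finite^'v"
  shows "zrank_quot UNIV (range ((*v) A)) \<le> CARD('v) - vec.dim (range ((*v) (qmat A)))"
  unfolding zrank_quot_def
proof (rule cSup_least)
  show "card ` {F. finite F \<and> F \<subseteq> UNIV \<and> zindep_mod (range ((*v) A)) F} \<noteq> {}"
  proof -
    have "{} \<in> {F. finite F \<and> F \<subseteq> UNIV \<and> zindep_mod (range ((*v) A)) F}"
      by (simp add: zindep_mod_def)
    then show ?thesis by blast
  qed
next
  fix n assume "n \<in> card ` {F. finite F \<and> F \<subseteq> UNIV \<and> zindep_mod (range ((*v) A)) F}"
  then obtain F where F: "finite F" "zindep_mod (range ((*v) A)) F" "n = card F" by blast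
  have ind': "zindep_mod (range (\<lambda>z. A *v z)) F" using F(2) by simp
  let ?G = "to_Q ` F"
  let ?W = "range ((*v) (qmat A))"
  have finG: "finite ?G" using F(1) by simp
  have key: "\<And>c. (\<Sum>v\<in>?G. c v *s v) \<in> range (\<lambda>y. qmat A *v y) \<Longrightarrow> \<forall>v\<in>?G. c v = 0"
    using zindep_gen[OF F(1) ind'] by blast
  have indG: "vec.independent ?G"
    unfolding vec.independent_explicit
  proof (intro conjI allI impI)
    show "finite ?G" by (rule finG)
    fix c assume "(\<Sum>v\<in>?G. c v *s v) = 0"
    then have "(\<Sum>v\<in>?G. c v *s v) \<in> range (\<lambda>y. qmat A *v y)"
      by (metis matrix_vector_mult_0_right rangeI)
    then show "\<forall>v\<in>?G. c v = 0" by (rule key)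
  qed
  have int0: "vec.span ?G \<inter> ?W \<subseteq> {0}"
  proof
    fix x assume x: "x \<in> vec.span ?G \<inter> ?W"
    then obtain c where c: "x = (\<Sum>v\<in>?G. c v *s v)"
      using vec.span_finite[OF finG] by blast
    have "(\<Sum>v\<in>?G. c v *s v) \<in> range (\<lambda>y. qmat A *v y)" using x c by auto
    then have "\<forall>v\<in>?G. c v = 0" by (rule key)
    then have "(\<Sum>v\<in>?G. c v *s v) = 0" by (intro sum.neutral) simp
    then show "x \<in> {0}" using c by simp
  qed
  have subW: "vec.subspace ?W"
    using vec.subspace_image[OF vec.subspace_UNIV] by simp
  have "vec.dim {x + y |x y. x \<in> vec.span ?G \<and> y \<in> ?W} + vec.dim (vec.span ?G \<inter> ?W)
        = vec.dim (vec.span ?G) + vec.dim ?W"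
    by (rule vec.dim_sums_Int[OF vec.subspace_span subW])
  moreover have "vec.dim (vec.span ?G \<inter> ?W) = 0" using int0 by simp
  moreover have "vec.dim (vec.span ?G) = card F"
    using vec.dim_span_eq_card_independent[OF indG] card_image[OF inj_on_subset[OF to_Q_inj]] by simp
  moreover have "vec.dim {x + y |x y. x \<in> vec.span ?G \<and> y \<in> ?W} \<le> CARD('v)"
    using vec.dim_subset_UNIV by (simp add: vec.dimension_def card_cart_basis)
  ultimately show "n \<le> CARD('v) - vec.dim ?W" using F(3) by simp
qed

lemma det_hom:
  fixes f :: "'a::comm_ring_1 \<Rightarrow> 'b::comm_ring_1" and A :: "'a^'n::finite^'n"
  assumes add: "\<And>a b. f (a + b) = f a + f b" and mult: "\<And>a b. f (a * b) = f a * f b"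
    and one: "f 1 = 1"
  shows "det (\<chi> i j. f (A$i$j)) = f (det A)"
proof -
  have f0: "f 0 = 0" using add[of 0 0] by simp
  have fneg: "f (- a) = - f a" for a
    using minus_unique[of "f a" "f (-a)"] add[of a "-a"] f0 by simp
  have fsum: "f (sum g S) = (\<Sum>x\<in>S. f (g x))" for g :: "_ \<Rightarrow> 'a" and S
    by (induction S rule: infinite_finite_induct) (simp_all add: f0 add)
  have fprod: "f (prod g S) = (\<Prod>x\<in>S. f (g x))" for g :: "_ \<Rightarrow> 'a" and S
    by (induction S rule: infinite_finite_induct) (simp_all add: one mult)
  have fsign: "f (of_int (sign p)) = of_int (sign p)" for p :: "'n \<Rightarrow> 'n"
    by (cases rule: sign_cases[of p]) (simp_all add: one fneg)
  show ?thesis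
    unfolding det_def by (simp add: fsum fprod mult fsign)
qed

lemma det_rows_dvd:
  fixes A :: "'a::comm_ring_1^'n::finite^'n"
  assumes "\<forall>j\<in>J. \<forall>i. q dvd A$j$i"
  shows "q ^ card J dvd det A"
  unfolding det_def
proof (rule dvd_sum)
  fix p assume "p \<in> {p. p permutes (UNIV :: 'n set)}"
  have "(\<Prod>i\<in>J. q) dvd (\<Prod>i\<in>J. A$i$p i)"
    using assms by (intro prod_dvd_prod) blast
  then have "q ^ card J dvd (\<Prod>i\<in>J. A$i$p i)" by simp
  moreover have "(\<Prod>i\<in>UNIV. A$i$p i) = (\<Prod>i\<in>J. A$i$p i) * (\<Prod>i\<in>UNIV - J. A$i$p i)"
    by (metis (no_types, lifting) finite Diff_partition prod.subset_diff subset_UNIV mult.commute)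
  ultimately have "q ^ card J dvd (\<Prod>i\<in>UNIV. A$i$p i)" by simp
  then show "q ^ card J dvd of_int (sign p) * (\<Prod>i\<in>UNIV. A$i$p i)" by (rule dvd_mult)
qed

abbreviation mpi :: "int poly \<Rightarrow> rat poly" where "mpi \<equiv> map_poly of_int"

lemma mpi_add: "mpi (p + q) = mpi p + mpi q"
  by (rule poly_eqI) (simp add: coeff_map_poly)

lemma mpi_mult: "mpi (p * q) = mpi p * mpi q"
  by (rule poly_eqI) (simp add: coeff_map_poly coeff_mult of_int_sum)

lemma mpi_one: "mpi 1 = 1" by simp

lemma mpi_pow: "mpi (p ^ n) = mpi p ^ n"
  by (induction n) (simp_all add: mpi_mult)

lemma poly_mpi: "poly (mpi p) (of_int x) = of_int (poly p x)"
  by (induction p) (simp_all add: map_poly_pCons)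

lemma mpi_eq0: "mpi p = 0 \<longleftrightarrow> p = 0"
  by (rule map_poly_eq_0_iff) auto

lemma order_mpi_le:
  assumes "p \<noteq> 0"
  shows "order 1 (mpi p) \<le> order 1 p"
proof -
  obtain q where q: "p = [:-1, 1:] ^ order 1 p * q" "\<not> [:-1, 1:] dvd q"
    using order_decomp[OF assms, of 1] by auto
  have q0: "q \<noteq> 0" using q(2) by auto
  have "poly q 1 \<noteq> 0" using q(2) poly_eq_0_iff_dvd[of q 1] by simp
  then have "poly (mpi q) 1 \<noteq> 0" using poly_mpi[of q 1] by simp
  then have oq: "order 1 (mpi q) = 0" by (rule order_0I)
  have m1: "mpi [:-1, 1:] = [:-1, 1:]" by (simp add: map_poly_pCons)
  have e: "mpi p = [:-1, 1:] ^ order 1 p * mpi q"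
    by (subst q(1)) (simp add: mpi_mult mpi_pow m1)
  have nz: "mpi p \<noteq> 0" using assms mpi_eq0 by simp
  have "order 1 (mpi p) = order 1 (([:-1, 1:] :: rat poly) ^ order 1 p) + order 1 (mpi q)"
    using nz unfolding e by (rule order_mult)
  also have "order 1 (([:-1, 1:] :: rat poly) ^ order 1 p) + order 1 (mpi q) = order 1 p" using oq by (simp add: order_power_n_n)
  finally show ?thesis by simp
qed

lemma const_poly_add: "[:a + b:] = [:a:] + [:b:]" by simp
lemma const_poly_mult: "[:a * b:] = [:a:] * [:(b::'a::comm_ring_1):]" by simp
lemma const_poly_one: "[:1:] = (1::'a::comm_ring_1 poly)" by simp

lemma det_const_poly:
  fixes P :: "'a::comm_ring_1^'n::finite^'n"
  shows "det (\<chi> i j. [:P$i$j:]) = [:det P:]"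
  by (rule det_hom) simp_all

definition lift :: "rat^'v \<Rightarrow> rat poly^'v" where
  "lift v = (\<chi> i. [:v$i:])"

lemma pair_sum: "(\<Sum>j\<in>A. [:a j, b j:]) = [:sum a A, sum b A:]"
  by (induction A rule: infinite_finite_induct) simp_all

lemma row_formula:
  fixes M :: "rat^'v::finite^'v" and Np :: "rat poly^'v^'v"
  assumes Np: "\<And>i j. Np$i$j = [:(if i = j then 1 else 0), M$i$j - (if i = j then 1 else 0):]"
  shows "(Np *v lift v)$i = [:v$i, (M *v v)$i - v$i:]"
proof -
  have "(Np *v lift v)$i = (\<Sum>j\<in>UNIV. [:(if i = j then 1 else 0) * v$j, (M$i$j - (if i = j then 1 else 0)) * v$j:])"
    by (simp add: matrix_vector_mult_def lift_def Np mult.commute)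
  also have "\<dots> = [:(\<Sum>j\<in>UNIV. (if i = j then 1 else 0) * v$j), (\<Sum>j\<in>UNIV. (M$i$j - (if i = j then 1 else 0)) * v$j):]"
    by (rule pair_sum)
  also have "(\<Sum>j\<in>UNIV. (if i = j then 1 else 0) * v$j) = (\<Sum>j\<in>UNIV. if i = j then v$j else 0)"
    by (intro sum.cong) auto
  also have "\<dots> = v$i" by simp
  also have "(\<Sum>j\<in>UNIV. (M$i$j - (if i = j then 1 else 0)) * v$j) = (\<Sum>j\<in>UNIV. M$i$j * v$j - (if i = j then v$j else 0))"
    by (intro sum.cong) (auto simp: algebra_simps)
  also have "\<dots> = (M *v v)$i - v$i"
    by (simp add: matrix_vector_mult_def sum_subtractf)
  finally show ?thesis .
qed

lemma det_dvd_main: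
  fixes M :: "rat^'v::finite^'v" and Np :: "rat poly^'v^'v"
  assumes Np: "\<And>i j. Np$i$j = [:(if i = j then 1 else 0), M$i$j - (if i = j then 1 else 0):]"
    and w: "M *v w = v1" and v1: "v1 \<noteq> 0" "M *v v1 = 0"
  shows "[:1,-1:] ^ (vec.dim {x. M *v x = 0} + 1) dvd det Np"
proof -
  let ?K = "{x. M *v x = 0}"
  define q :: "rat poly" where "q = [:1,-1:]"
  define X :: "rat poly" where "X = [:0,1:]"
  have q0: "q \<noteq> 0" by (simp add: q_def)
  have subK: "vec.subspace ?K" by (rule vec.subspace_kernel)
  have ind1: "vec.independent {v1}"
    using v1(1) vec.independent_insert[of v1 "{}"] by simp
  obtain BK where BK: "{v1} \<subseteq> BK" "BK \<subseteq> ?K" "vec.independent BK" "?K \<subseteq> vec.span BK"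
    by (rule vec.maximal_independent_subset_extend[of "{v1}" ?K]) (use ind1 v1 in auto)
  have cardBK: "card BK = vec.dim ?K" by (rule vec.basis_card_eq_dim[OF BK(2) BK(4) BK(3)])
  have spanBK: "vec.span BK \<subseteq> ?K"
    using vec.span_minimal[OF BK(2) subK] .
  have wK: "w \<notin> ?K" using w v1 by simp
  have wBK: "w \<notin> vec.span BK" using spanBK wK by blast
  have wBK': "w \<notin> BK" using wBK vec.span_base by blast
  have indw: "vec.independent (insert w BK)" by (rule vec.independent_insertI[OF wBK BK(3)])
  obtain S where S: "insert w BK \<subseteq> S" "vec.independent S" "UNIV \<subseteq> vec.span S"
    by (rule vec.maximal_independent_subset_extend[of "insert w BK" UNIV]) (use indw in auto)
  have finS: "finite S" using S(2) by (rule vec.finiteI_independent)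
  have cardS: "card S = CARD('v)"
    using vec.basis_card_eq_dim[of S UNIV] S by (simp add: card_cart_basis)
  obtain g where g: "bij_betw g (UNIV :: 'v set) S"
    using finite_same_card_bij[of "UNIV :: 'v set" S] finS cardS by auto
  have gS: "g j \<in> S" for j using g bij_betwE by blast
  have ginj: "inj g" using g bij_betw_def by blast
  define J where "J = {j. g j \<in> BK}"
  define j0 where "j0 = inv_into UNIV g v1"
  define j1 where "j1 = inv_into UNIV g w"
  have gj0: "g j0 = v1" unfolding j0_def using bij_betw_inv_into_right[OF g] S BK(1) by blast
  have gj1: "g j1 = w" unfolding j1_def using bij_betw_inv_into_right[OF g] S by blast
  have j0J: "j0 \<in> J" using gj0 BK(1) J_def by simp
  have j1J: "j1 \<notin> J" using gj1 wBK' J_def by simp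
  have j01: "j1 \<noteq> j0" using j0J j1J by blast
  have gJ: "g ` J = BK"
  proof
    show "g ` J \<subseteq> BK" unfolding J_def by blast
    show "BK \<subseteq> g ` J"
    proof
      fix b assume b: "b \<in> BK"
      then have "b \<in> S" using S(1) by blast
      then have "g (inv_into UNIV g b) = b" using bij_betw_inv_into_right[OF g] by blast
      then show "b \<in> g ` J" unfolding J_def using b by (metis (mono_tags, lifting) image_eqI mem_Collect_eq)
    qed
  qed
  have cardJ: "card J = card BK"
    using card_image[OF inj_on_subset[OF ginj subset_UNIV]] gJ by metis
  \<comment> \<open>the basis matrix\<close>
  define P :: "rat^'v^'v" where "P = (\<chi> j i. g j $ i)"
  have rowP: "row j P = g j" for j by (simp add: row_def P_def vec_eq_iff)
  have detP: "det P \<noteq> 0"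
  proof -
    have "\<forall>c. (\<Sum>i\<in>UNIV. c i *s row i P) = 0 \<longrightarrow> (\<forall>i. c i = 0)"
    proof (rule allI, rule impI)
      fix c :: "'v \<Rightarrow> rat" assume "(\<Sum>i\<in>UNIV. c i *s row i P) = 0"
      then have "(\<Sum>i\<in>UNIV. c i *s g i) = 0" by (simp add: rowP)
      moreover have "(\<Sum>i\<in>UNIV. c i *s g i) = (\<Sum>v\<in>S. c (inv_into UNIV g v) *s v)"
        using sum.reindex_bij_betw[OF g, of "\<lambda>v. c (inv_into UNIV g v) *s v"] ginj by simp
      ultimately have "(\<Sum>v\<in>S. c (inv_into UNIV g v) *s v) = 0" by simp
      moreover have "\<forall>c. (\<Sum>v\<in>S. c v *s v) = 0 \<longrightarrow> (\<forall>v\<in>S. c v = 0)"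
        using S(2) unfolding vec.independent_explicit by blast
      ultimately have "\<forall>v\<in>S. c (inv_into UNIV g v) = 0"
        by (rule mp[OF spec[of _ "\<lambda>v. c (inv_into UNIV g v)"], rotated])
      then show "\<forall>i. c i = 0" using gS ginj by (metis inv_f_f)
    qed
    then have "invertible P"
      unfolding invertible_right_inverse matrix_right_invertible_independent_rows by blast
    then show ?thesis by (simp add: invertible_det_nz)
  qed
  \<comment> \<open>the row matrix\<close>
  define R :: "rat poly^'v^'v" where "R = (\<chi> j. Np *v lift (g j))"
  have Rji: "R$j$i = [:g j$i, (M *v g j)$i - g j$i:]" for j i
    using row_formula[OF Np] by (simp add: R_def)
  have Rmul: "R = (\<chi> j i. [:P$j$i:]) ** transpose Np"
    by (simp add: R_def vec_eq_iff matrix_matrix_mult_def matrix_vector_mult_def transpose_def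
        lift_def P_def mult.commute)
  have detR: "det R = [:det P:] * det Np"
    by (simp add: Rmul det_mul det_const_poly)
  have RJ: "R$j = q *s lift (g j)" if "j \<in> J" for j
  proof -
    have "M *v g j = 0" using that J_def BK(2) by auto
    then show ?thesis by (simp add: vec_eq_iff Rji q_def lift_def)
  qed
  have Rj0: "R$j0 = q *s lift v1" using RJ[OF j0J] gj0 by simp
  have Rj1: "R$j1 = q *s lift w + X *s lift v1"
    by (simp add: vec_eq_iff Rji gj1 w q_def X_def lift_def)
  define R1 where "R1 = (\<chi> k. if k = j1 then q *s R$k else R$k)"
  have d1: "det R1 = q * det R"
    using det_row_mul[of j1 q "\<lambda>k. R$k" "\<lambda>k. R$k"] by (simp add: R1_def)
  define R2 where "R2 = (\<chi> k. if k = j1 then row j1 R1 + (- X) *s row j0 R1 else row k R1)"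
  have d2: "det R2 = det R1" unfolding R2_def by (rule det_row_operation[OF j01])
  define R3 where "R3 = (\<chi> k. if k = j1 then q *s lift w else R$k)"
  have R2e: "R2 = (\<chi> k. if k = j1 then q *s (q *s lift w) else R$k)"
    unfolding R2_def R1_def
    by (simp add: vec_eq_iff row_def Rj1 Rj0 j01[symmetric] algebra_simps)
  have d3: "det R2 = q * det R3"
    unfolding R2e R3_def using det_row_mul[of j1 q "\<lambda>k. q *s lift w" "\<lambda>k. R$k"] by simp
  have eq: "det R = det R3" using d1 d2 d3 q0 by simp
  have "\<forall>j\<in>insert j1 J. \<forall>i. q dvd R3$j$i"
    using RJ j1J by (auto simp: R3_def)
  then have "q ^ card (insert j1 J) dvd det R3" by (rule det_rows_dvd)
  moreover have c: "card (insert j1 J) = vec.dim ?K + 1"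
    using j1J cardJ cardBK finite[of J] by simp
  ultimately have "q ^ (vec.dim ?K + 1) dvd det R" by (simp only: eq)
  then have dv: "q ^ (vec.dim ?K + 1) dvd [:det P:] * det Np" by (simp only: detR)
  have u: "[:det P:] * [:1 / det P:] = (1 :: rat poly)"
  proof -
    have "[:det P:] * [:1 / det P:] = [:det P * (1 / det P):]" by (simp only: const_poly_mult)
    also have "\<dots> = [:1:]" using detP by simp
    finally show ?thesis by simp
  qed
  have "[:det P:] * det Np dvd det Np"
  proof (rule dvdI)
    show "det Np = [:det P:] * det Np * [:1 / det P:]"
      using u by (metis mult.commute mult.left_commute mult_1_right)
  qed
  then show ?thesis using dv q_def by (metis dvd_trans)
qed

theorem proposition2p9:
  fixes E :: "'e set" and o' t :: "'e \<Rightarrow> 'v::finite"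
  assumes "finite E"
    and "strongly_connected E o' t"
    and "delta E o' t = 0"
  shows "BF E o' t ` L_X E o' t \<subseteq> range (BF E o' t)
       \<and> range (BF E o' t) \<subseteq> L_X E o' t
       \<and> zrank (BF E o' t ` L_X E o' t) = zrank (range (BF E o' t))
       \<and> zrank (range (BF E o' t)) = zrank (L_X E o' t)"
proof -
  define B where "B = BF_mat E o' t"
  define M where "M = qmat B"
  define adj where "adj = adj_mat E o' t"
  have BFe: "BF E o' t = (*v) B" by (simp add: BF_def B_def fun_eq_iff)
  have BFQe: "BF_Q E o' t = (*v) M" by (simp add: BF_Q_qmat B_def M_def fun_eq_iff)
  have Le: "L_X E o' t = {z. to_Q z \<in> range ((*v) M)}" by (simp add: L_X_def BFQe)
  define Z :: "int poly^'v^'v" where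
    "Z = (\<chi> i j. (if i = j then 1 else 0) - [:0, of_int (adj $ i $ j):])"
  have zeta: "zeta_poly E o' t = det Z" by (simp add: zeta_poly_def Z_def adj_def)
  define Np :: "rat poly^'v^'v" where "Np = (\<chi> i j. mpi (Z$i$j))"
  have detNp: "det Np = mpi (zeta_poly E o' t)"
    unfolding Np_def zeta by (rule det_hom) (simp_all add: mpi_add mpi_mult)
  have Bij: "B$i$j = (if i = j then 1 else 0) - adj$i$j" for i j
    by (simp add: B_def adj_def BF_mat_def mat_def)
  have Zij: "Z$i$j = [:(if i = j then 1 else 0), - adj$i$j:]" for i j
    by (simp add: Z_def one_pCons)
  have Npij: "Np$i$j = [:(if i = j then 1 else 0), M$i$j - (if i = j then 1 else 0):]" for i j
    by (simp add: Np_def Zij map_poly_pCons M_def qmat_def Bij)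
  have zeta0: "zeta_poly E o' t \<noteq> 0"
  proof
    assume z: "zeta_poly E o' t = 0"
    have "det (\<chi> i j. poly (Z$i$j) 0) = poly (det Z) 0"
      by (rule det_hom) simp_all
    moreover have "(\<chi> i j. poly (Z$i$j) 0) = (mat 1 :: int^'v^'v)"
      by (simp add: vec_eq_iff Zij mat_def)
    ultimately have "poly (det Z) 0 = 1" by simp
    then show False using z zeta by simp
  qed
  have inter: "x = 0" if x: "x \<in> range ((*v) M)" "M *v x = 0" for x
  proof (rule ccontr)
    assume x0: "x \<noteq> 0"
    obtain w where w: "M *v w = x" using x(1) by blast
    let ?K = "{x. M *v x = 0}"
    have A: "[:1,-1:] ^ (vec.dim ?K + 1) dvd det Np"
      by (rule det_dvd_main[OF Npij w x0 x(2)])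
    have B: "([:-1,1:] :: rat poly) ^ (vec.dim ?K + 1) dvd [:1,-1:] ^ (vec.dim ?K + 1)"
    proof (rule dvd_power_same)
      have "([:1,-1:] :: rat poly) = [:-1,1:] * (-1)" by simp
      then show "([:-1,1:] :: rat poly) dvd [:1,-1:]" by (rule dvdI)
    qed
    have "([:-1,1:] :: rat poly) ^ (vec.dim ?K + 1) dvd mpi (zeta_poly E o' t)"
      using dvd_trans[OF B A] unfolding detNp .
    moreover have "mpi (zeta_poly E o' t) \<noteq> 0" using zeta0 mpi_eq0 by simp
    ultimately have "vec.dim ?K + 1 \<le> order 1 (mpi (zeta_poly E o' t))"
      using order_divides[of "1::rat" "vec.dim ?K + 1" "mpi (zeta_poly E o' t)"] by simp
    also have "\<dots> \<le> r_X E o' t" unfolding r_X_def by (rule order_mpi_le[OF zeta0])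
    finally have rX: "vec.dim ?K + 1 \<le> r_X E o' t" .
    have "rank_BF_group E o' t \<le> CARD('v) - vec.dim (range ((*v) M))"
      unfolding rank_BF_group_def BFe M_def by (rule coker_rank_le)
    also have "\<dots> = vec.dim ?K" using rank_nullity[of M] by simp
    finally have "rank_BF_group E o' t \<le> vec.dim ?K" .
    then show False using rX assms(3) unfolding delta_def by simp
  qed
  have inter': "\<And>x. x \<in> range ((*v) (qmat B)) \<Longrightarrow> qmat B *v x = 0 \<Longrightarrow> x = 0"
    using inter unfolding M_def by blast
  note D = dims_main[of B, OF inter']
  have r1: "zrank (BF E o' t ` L_X E o' t) = vec.dim (range ((*v) M))"
    unfolding zrank_dim BFe Le M_def using D(3) by simp
  have r2: "zrank (range (BF E o' t)) = vec.dim (range ((*v) M))"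
    unfolding zrank_dim BFe M_def using D(2) by simp
  have r3: "zrank (L_X E o' t) = vec.dim (range ((*v) M))"
    unfolding zrank_dim Le M_def using D(1) by simp
  have s2: "range (BF E o' t) \<subseteq> L_X E o' t"
    unfolding BFe Le M_def by (auto simp: to_Q_mult)
  show ?thesis using r1 r2 r3 s2 by auto
qed

end
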